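(* Let $\mathcal U(\mathbb R)$ be the family of open subsets of $\mathbb R$, and let $F:\mathcal U(\mathbb R)\to\mathcal U(\mathbb R)$ be a bijection satisfying $F(U_1\cap U_2)=F(U_1)\cap F(U_2)$ for all $U_1,U_2\in\mathcal U(\mathbb R)$. Then there exists a bijection $u:\mathbb R\to\mathbb R$ such that $F(U)=\{u(x):x\in U\}$ for every open $U\subset\mathbb R$. *)

theory Defs
  imports Complex_Main
begin

end

theory Submission
  imports Defs
begin

theorem lemmaB1:
  fixes F :: "real set \<Rightarrow> real set"
  assumes bij: "bij_betw F {U. open U} {U. open U}"
    and inter: "\<And>U1 U2. open U1 \<Longrightarrow> open U2 \<Longrightarrow> F (U1 \<inter> U2) = F U1 \<inter> F U2"
  shows "\<exists>u :: real \<Rightarrow> real. bij u \<and> (\<forall>U. open U \<longrightarrow> F U = u ` U)"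
proof -
  have injF: "\<And>U V. open U \<Longrightarrow> open V \<Longrightarrow> F U = F V \<Longrightarrow> U = V"
    using bij unfolding bij_betw_def inj_on_def by auto
  have surjF: "\<And>V. open V \<Longrightarrow> \<exists>U. open U \<and> V = F U"
    using bij unfolding bij_betw_def by auto
  have opF: "\<And>U. open U \<Longrightarrow> open (F U)"
    using bij unfolding bij_betw_def by auto
  have mono: "\<And>U V. open U \<Longrightarrow> open V \<Longrightarrow> U \<subseteq> V \<longleftrightarrow> F U \<subseteq> F V"
  proof
    fix U V :: "real set" assume o: "open U" "open V"
    { assume "U \<subseteq> V" then have "U \<inter> V = U" by blast
      then show "F U \<subseteq> F V" using inter[OF o] by (metis Int_lower2) }
    { assume "F U \<subseteq> F V" then have "F (U \<inter> V) = F U" using inter[OF o] by blast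
      then have "U \<inter> V = U" using injF o by (simp add: open_Int)
      then show "U \<subseteq> V" by blast }
  qed
  have FU: "F UNIV = UNIV"
  proof -
    obtain W where W: "open W" "UNIV = F W" using surjF[of UNIV] by auto
    have "F W \<subseteq> F UNIV" using mono[OF W(1), of UNIV] by auto
    then show ?thesis using W by auto
  qed
  define coat where "coat U \<longleftrightarrow> U \<noteq> UNIV \<and> (\<forall>V. open V \<longrightarrow> U \<subseteq> V \<longrightarrow> V = U \<or> V = UNIV)" for U :: "real set"
  have opc: "\<And>x::real. open (- {x})" by (simp add: open_Compl)
  have coat_iff: "\<And>U. open U \<Longrightarrow> coat U \<longleftrightarrow> (\<exists>x. U = - {x})"
  proof
    fix U :: "real set" assume "open U" "coat U"
    then obtain x where x: "x \<notin> U" unfolding coat_def by auto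
    then have "U \<subseteq> - {x}" by auto
    then show "\<exists>x. U = - {x}" using \<open>coat U\<close> opc[of x] unfolding coat_def by auto
  next
    fix U :: "real set" assume "\<exists>x. U = - {x}"
    then obtain x where x: "U = - {x}" by auto
    show "coat U" unfolding coat_def x
    proof (intro conjI allI impI)
      show "- {x} \<noteq> UNIV" by auto
    next
      fix V assume "open V" "- {x} \<subseteq> V"
      then show "V = - {x} \<or> V = UNIV" by (cases "x \<in> V") auto
    qed
  qed
  have coatF: "\<And>U. open U \<Longrightarrow> coat U \<longleftrightarrow> coat (F U)"
  proof
    fix U :: "real set" assume o: "open U" and c: "coat U"
    show "coat (F U)" unfolding coat_def
    proof (intro conjI allI impI)
      show "F U \<noteq> UNIV" using c FU injF[OF o, of UNIV] unfolding coat_def by auto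
    next
      fix V assume "open V" "F U \<subseteq> V"
      then obtain W where W: "open W" "V = F W" using surjF by auto
      then have "U \<subseteq> W" using mono[OF o W(1)] \<open>F U \<subseteq> V\<close> by auto
      then have "W = U \<or> W = UNIV" using c W unfolding coat_def by auto
      then show "V = F U \<or> V = UNIV" using W FU by auto
    qed
  next
    fix U :: "real set" assume o: "open U" and c: "coat (F U)"
    show "coat U" unfolding coat_def
    proof (intro conjI allI impI)
      show "U \<noteq> UNIV" using c FU unfolding coat_def by auto
    next
      fix V assume V: "open V" "U \<subseteq> V"
      then have "F U \<subseteq> F V" using mono[OF o V(1)] by auto
      then have "F V = F U \<or> F V = F UNIV" using c opF[OF V(1)] FU unfolding coat_def by auto
      then show "V = U \<or> V = UNIV" using injF[OF V(1) o] injF[OF V(1) open_UNIV] by blast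
    qed
  qed
  have ex: "\<And>x. \<exists>y. F (- {x}) = - {y}"
  proof -
    fix x :: real
    have "coat (- {x})" using coat_iff[OF opc[of x]] by auto
    then have "coat (F (- {x}))" using coatF[OF opc[of x]] by simp
    then show "\<exists>y. F (- {x}) = - {y}" using coat_iff[OF opF[OF opc[of x]]] by simp
  qed
  define u where "u x = (SOME y. F (- {x}) = - {y})" for x
  have u: "\<And>x. F (- {x}) = - {u x}" unfolding u_def by (rule someI_ex[OF ex])
  have key: "\<And>U x. open U \<Longrightarrow> x \<in> U \<longleftrightarrow> u x \<in> F U"
  proof -
    fix U :: "real set" and x assume o: "open U"
    have "x \<notin> U \<longleftrightarrow> U \<subseteq> - {x}" by auto
    also have "\<dots> \<longleftrightarrow> F U \<subseteq> - {u x}" using mono[OF o opc[of x]] u[of x] by simp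
    also have "\<dots> \<longleftrightarrow> u x \<notin> F U" by auto
    finally show "x \<in> U \<longleftrightarrow> u x \<in> F U" by blast
  qed
  have "inj u"
  proof (rule injI)
    fix x y assume "u x = u y"
    then have "F (- {x}) = F (- {y})" using u by simp
    then have "- {x} = - {y}" using injF opc by blast
    then show "x = y" by auto
  qed
  moreover have "surj u"
  proof -
    { fix y
      obtain W where W: "open W" "- {y} = F W" using surjF[OF opc[of y]] by auto
      have "coat (F W)" using coat_iff[OF opc[of y]] W(2) by auto
      then have "coat W" using coatF W(1) by blast
      then obtain x where x: "W = - {x}" using coat_iff W(1) by blast
      then have "- {y} = - {u x}" using W u by simp
      then have "y = u x" by auto
      then have "y \<in> range u" by auto }
    then show ?thesis by auto
  qed
  moreover have "\<forall>U. open U \<longrightarrow> F U = u ` U"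
  proof (intro allI impI)
    fix U :: "real set" assume o: "open U"
    show "F U = u ` U"
    proof
      show "u ` U \<subseteq> F U" using key[OF o] by auto
    next
      show "F U \<subseteq> u ` U"
      proof
        fix y assume "y \<in> F U"
        obtain x where "y = u x" using \<open>surj u\<close> by (metis surjD)
        then show "y \<in> u ` U" using key[OF o, of x] \<open>y \<in> F U\<close> by auto
      qed
    qed
  qed
  ultimately show ?thesis by (auto simp: bij_def)
qed

end
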